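(* Let $g:\{0,1,2,3\}^*\to\{0,1,2,3\}^*$ be the morphism $g(0)=01$, $g(1)=20$, $g(2)=23$, $g(3)=02$, and $\tau$ the coding $\tau(0)=2$, $\tau(1)=1$, $\tau(2)=0$, $\tau(3)=1$; let $\mathbf{vtm}=\tau(g^\omega(0))=2102012101202102012021012102012\cdots$ (an infinite word over $\{0,1,2\}$). Let $\sigma:\{0,1,2\}^*\to\{0,1\}^*$ be the morphism $\sigma(0)=00011001011000111001011001110001011100101100010111$, $\sigma(1)=00011001011000101110010110011100010110001110010111$, $\sigma(2)=00011001011000101110010110001110010111000101100111$. Then $\sigma(\mathbf{vtm})$ is a $2$-automatic word containing only three distinct squares, and it is generated by a $2$-automaton with $109$ states (so it has weight $2\cdot 109=218$).
   Context: A square is a nonempty word $xx$; "containing" means as a factor. $g^\omega(0)$ denotes the infinite fixed point of $g$ starting with $0$. An infinite word is $k$-automatic if it is generated by a $k$-automaton (DFAO), i.e. a deterministic finite automaton with output which, given the base-$k$ representation of $n$ (most significant digit first), outputs the $n$th letter; equivalently, it is the image under a coding of a fixed point of a $k$-uniform morphism. The weight of a $k$-automatic word generated by a $k$-automaton with $s$ states (equivalently, the weight of the corresponding $k$-uniform morphism on $s$ letters) is $k\cdot s$. *)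

theory Defs
  imports Main
begin

definition morph :: "(nat \<Rightarrow> nat list) \<Rightarrow> nat list \<Rightarrow> nat list" where
  "morph h u = concat (map h u)"

(* g^omega(a): the n-th letter is the n-th letter of g^(n+1)(a) (well-defined as a
   limit when g(a) starts with a and g is prolongable, e.g. uniform). *)
definition fixpoint :: "(nat \<Rightarrow> nat list) \<Rightarrow> nat \<Rightarrow> (nat \<Rightarrow> nat)" where
  "fixpoint h a = (\<lambda>n. ((morph h ^^ (Suc n)) [a]) ! n)"

(* image of an infinite word under a nonerasing morphism *)
definition morph_inf :: "(nat \<Rightarrow> nat list) \<Rightarrow> (nat \<Rightarrow> nat) \<Rightarrow> (nat \<Rightarrow> nat)" where
  "morph_inf h x = (\<lambda>n. morph h (map x [0..<Suc n]) ! n)"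

definition g :: "nat \<Rightarrow> nat list" where
  "g a = (if a = 0 then [0,1] else if a = 1 then [2,0] else if a = 2 then [2,3] else [0,2])"

definition tau :: "nat \<Rightarrow> nat" where
  "tau a = (if a = 0 then 2 else if a = 1 then 1 else if a = 2 then 0 else 1)"

definition vtm :: "nat \<Rightarrow> nat" where
  "vtm = tau \<circ> fixpoint g 0"

definition str01 :: "string \<Rightarrow> nat list" where
  "str01 s = map (\<lambda>c. if c = CHR ''1'' then 1 else 0) s"

definition sigma :: "nat \<Rightarrow> nat list" where
  "sigma a = (if a = 0 then str01 ''00011001011000111001011001110001011100101100010111''
    else if a = 1 then str01 ''00011001011000101110010110011100010110001110010111''
    else str01 ''00011001011000101110010110001110010111000101100111'')"

definition is_factor :: "nat list \<Rightarrow> (nat \<Rightarrow> nat) \<Rightarrow> bool" where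
  "is_factor u w \<longleftrightarrow> (\<exists>i. \<forall>j < length u. w (i + j) = u ! j)"

definition squares_of :: "(nat \<Rightarrow> nat) \<Rightarrow> nat list set" where
  "squares_of w = {u. \<exists>x. x \<noteq> [] \<and> u = x @ x \<and> is_factor u w}"

(* base-k representation, most significant digit first, no leading zeros (0 \<mapsto> []) *)
function base_digits :: "nat \<Rightarrow> nat \<Rightarrow> nat list" where
  "base_digits k n = (if n = 0 \<or> k < 2 then [] else base_digits k (n div k) @ [n mod k])"
  by auto
termination by (relation "measure snd") auto

definition dfao_run :: "nat \<Rightarrow> nat \<Rightarrow> (nat \<Rightarrow> nat \<Rightarrow> nat) \<Rightarrow> nat \<Rightarrow> nat" where
  "dfao_run k q0 delta n = fold (\<lambda>d q. delta q d) (base_digits k n) q0"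

definition dfao_generates ::
  "nat \<Rightarrow> nat set \<Rightarrow> nat \<Rightarrow> (nat \<Rightarrow> nat \<Rightarrow> nat) \<Rightarrow> (nat \<Rightarrow> nat) \<Rightarrow> (nat \<Rightarrow> nat) \<Rightarrow> bool" where
  "dfao_generates k Q q0 delta out w \<longleftrightarrow>
     finite Q \<and> q0 \<in> Q \<and> (\<forall>q\<in>Q. \<forall>d<k. delta q d \<in> Q) \<and>
     (\<forall>n. out (dfao_run k q0 delta n) = w n)"

definition k_automatic :: "nat \<Rightarrow> (nat \<Rightarrow> nat) \<Rightarrow> bool" where
  "k_automatic k w \<longleftrightarrow> (\<exists>Q q0 delta out. dfao_generates k Q q0 delta out w)"

end

theory Submission
  imports Defs
begin

function yy :: "nat \<Rightarrow> nat" where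
  "yy n = (if n = 0 then 0 else g (yy (n div 2)) ! (n mod 2))"
  by auto
termination by (relation "measure id") auto

declare yy.simps[simp del]

lemma yy_0[simp]: "yy 0 = 0"
  by (simp add: yy.simps)

lemma g_len[simp]: "length (g a) = 2"
  by (simp add: g_def)

lemma g_00: "g 0 ! 0 = 0" by (simp add: g_def)

lemma yy_eq: "yy n = g (yy (n div 2)) ! (n mod 2)"
  using yy.simps[of n] by (cases "n = 0") (simp_all add: g_def)

lemma yy_rec: "d < 2 \<Longrightarrow> yy (2*m + d) = g (yy m) ! d"
  using yy_eq[of "2*m+d"] by simp

lemma g_lt4: "d < 2 \<Longrightarrow> g a ! d < 4"
  by (auto simp: g_def nth_Cons split: nat.splits)

lemma yy_lt4: "yy n < 4"
proof -
  have "yy (2*(n div 2) + n mod 2) < 4" by (subst yy_rec) (auto intro: g_lt4)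
  then show ?thesis by simp
qed

lemma morph_append: "morph h (xs @ ys) = morph h xs @ morph h ys"
  by (simp add: morph_def)

lemma morph_g_nth: "m < length xs \<Longrightarrow> d < 2 \<Longrightarrow> morph g xs ! (2*m+d) = g (xs ! m) ! d"
proof (induction xs arbitrary: m)
  case Nil then show ?case by simp
next
  case (Cons x xs)
  show ?case
  proof (cases m)
    case 0 then show ?thesis using Cons by (simp add: morph_def nth_append)
  next
    case (Suc k)
    then have "morph g (x # xs) ! (2*m+d) = morph g xs ! (2*k+d)"
      by (simp add: morph_def nth_append)
    then show ?thesis using Cons Suc by simp
  qed
qed

lemma morph_g_len: "length (morph g xs) = 2 * length xs"
  by (induction xs) (auto simp: morph_def)

definition YY :: "nat \<Rightarrow> nat list" where "YY k = (morph g ^^ k) [0]"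

lemma YY_Suc: "YY (Suc k) = morph g (YY k)" by (simp add: YY_def)
lemma YY_len: "length (YY k) = 2^k"
  by (induction k) (auto simp: YY_def morph_g_len)

lemma YY_nth: "n < 2^k \<Longrightarrow> YY k ! n = yy n"
proof (induction k arbitrary: n)
  case 0 then show ?case by (simp add: YY_def)
next
  case (Suc k)
  have "n div 2 < 2^k" using Suc.prems by auto
  then have "YY (Suc k) ! n = g (YY k ! (n div 2)) ! (n mod 2)"
    using morph_g_nth[of "n div 2" "YY k" "n mod 2"] by (simp add: YY_Suc YY_len)
  also have "\<dots> = g (yy (n div 2)) ! (n mod 2)" using \<open>n div 2 < 2^k\<close> Suc.IH by simp
  also have "\<dots> = yy n" by (rule yy_eq[symmetric])
  finally show ?case .
qed

lemma fixpoint_yy: "fixpoint g 0 = yy"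
proof
  fix n
  have "n < 2^(Suc n)"
    by (metis less_exp lessI order.strict_trans)
  then show "fixpoint g 0 n = yy n"
    using YY_nth[of n "Suc n"] by (simp add: fixpoint_def YY_def)
qed

lemma vtm_yy: "vtm n = tau (yy n)"
  by (simp add: vtm_def fixpoint_yy)

definition S11 :: "nat list list" where
  "S11 = [[0,1,2,0,2,3,0,1,2,3,0],
    [0,1,2,0,2,3,0,2,0,1,2],
    [0,1,2,3,0,1,2,0,2,3,0],
    [0,1,2,3,0,2,0,1,2,0,2],
    [0,1,2,3,0,2,0,1,2,3,0],
    [0,2,0,1,2,0,2,3,0,1,2],
    [0,2,0,1,2,0,2,3,0,2,0],
    [0,2,0,1,2,3,0,1,2,0,2],
    [0,2,3,0,1,2,3,0,2,0,1],
    [0,2,3,0,2,0,1,2,0,2,3],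
    [0,2,3,0,2,0,1,2,3,0,1],
    [1,2,0,2,3,0,1,2,3,0,2],
    [1,2,0,2,3,0,2,0,1,2,0],
    [1,2,0,2,3,0,2,0,1,2,3],
    [1,2,3,0,1,2,0,2,3,0,1],
    [1,2,3,0,1,2,0,2,3,0,2],
    [1,2,3,0,2,0,1,2,0,2,3],
    [1,2,3,0,2,0,1,2,3,0,1],
    [2,0,1,2,0,2,3,0,1,2,3],
    [2,0,1,2,0,2,3,0,2,0,1],
    [2,0,1,2,3,0,1,2,0,2,3],
    [2,0,2,3,0,1,2,3,0,2,0],
    [2,0,2,3,0,2,0,1,2,0,2],
    [2,0,2,3,0,2,0,1,2,3,0],
    [2,3,0,1,2,0,2,3,0,1,2],
    [2,3,0,1,2,0,2,3,0,2,0],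
    [2,3,0,1,2,3,0,2,0,1,2],
    [2,3,0,2,0,1,2,0,2,3,0],
    [2,3,0,2,0,1,2,3,0,1,2],
    [3,0,1,2,0,2,3,0,1,2,3],
    [3,0,1,2,0,2,3,0,2,0,1],
    [3,0,1,2,3,0,2,0,1,2,0],
    [3,0,1,2,3,0,2,0,1,2,3],
    [3,0,2,0,1,2,0,2,3,0,1],
    [3,0,2,0,1,2,0,2,3,0,2],
    [3,0,2,0,1,2,3,0,1,2,0]]"

lemma sigma_len: "length (sigma a) = 50"
  by (simp add: sigma_def str01_def)

lemma concat_uniform_nth:
  "(\<forall>x\<in>set xs. length (h x) = c) \<Longrightarrow> n < c * length xs \<Longrightarrow>
   concat (map h xs) ! n = h (xs ! (n div c)) ! (n mod c)"
proof (induction xs arbitrary: n)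
  case Nil then show ?case by simp
next
  case (Cons x xs)
  have hx: "length (h x) = c" using Cons.prems by simp
  show ?case
  proof (cases "n < c")
    case True then show ?thesis using hx by (simp add: nth_append)
  next
    case False
    then have c: "c > 0" "n - c < c * length xs" using Cons.prems by auto
    have e: "n = (n - c) + c" using False by simp
    have "n div c = Suc ((n - c) div c)" using div_add_self2[of c "n-c"] c e by simp
    then have d1: "(n - c) div c = n div c - 1" and d2: "xs ! (n div c - 1) = (x#xs) ! (n div c)" by simp_all
    have m1: "(n - c) mod c = n mod c" using c by (subst (2) e) simp
    have "concat (map h (x#xs)) ! n = concat (map h xs) ! (n - c)"
      using False hx by (simp add: nth_append)
    also have "\<dots> = h (xs ! ((n - c) div c)) ! ((n - c) mod c)"
      using Cons c by auto
    finally show ?thesis using d1 d2 m1 by simp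
  qed
qed

lemma vtm_fun: "vtm = (\<lambda>n. tau (yy n))"
  by (rule ext) (simp add: vtm_yy)

lemma W_eq: "morph_inf sigma vtm n = sigma (tau (yy (n div 50))) ! (n mod 50)"
proof -
  have "morph sigma (map vtm [0..<Suc n]) ! n = sigma (map vtm [0..<Suc n] ! (n div 50)) ! (n mod 50)"
    unfolding morph_def by (rule concat_uniform_nth) (auto simp: sigma_len)
  also have "map vtm [0..<Suc n] ! (n div 50) = vtm (n div 50)"
    by (subst nth_map) (auto simp del: upt_Suc)
  finally show ?thesis unfolding morph_inf_def vtm_fun by (simp del: upt_Suc)
qed

definition cat :: "nat \<Rightarrow> nat \<Rightarrow> nat \<Rightarrow> nat" where
  "cat x z k = (if k < 50 then sigma x ! k else sigma z ! (k - 50))"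

lemma W_cat:
  assumes "b < 50" "b + j < 100"
  shows "morph_inf sigma vtm (50*a + b + j) = cat (tau (yy a)) (tau (yy (Suc a))) (b + j)"
proof (cases "b + j < 50")
  case True
  have e: "50*a+b+j = (b+j) + 50*a" by simp
  have "(50*a+b+j) div 50 = a" "(50*a+b+j) mod 50 = b + j" using True unfolding e by simp_all
  then show ?thesis using True by (simp add: W_eq cat_def)
next
  case False
  have e: "50*a+b+j = (b+j-50) + 50*Suc a" using False by simp
  have "(50*a+b+j) mod 50 = (b+j-50) mod 50" by (subst e, rule mod_mult_self2)
  moreover have "(50*a+b+j) div 50 = Suc a + (b+j-50) div 50" by (subst e, rule div_mult_self2) simp
  ultimately have "(50*a+b+j) div 50 = Suc a" "(50*a+b+j) mod 50 = b + j - 50" using False assms by simp_all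
  then show ?thesis using False by (simp add: W_eq cat_def)
qed

definition yw :: "nat \<Rightarrow> nat \<Rightarrow> nat list" where "yw i k = map yy [i..<i+k]"

lemma yw_len[simp]: "length (yw i k) = k" by (simp add: yw_def)
lemma yw_nth[simp]: "j < k \<Longrightarrow> yw i k ! j = yy (i + j)" by (simp add: yw_def)

lemma g_pair: "g a = [g a ! 0, g a ! 1]"
  by (simp add: g_def)

lemma morph_yw: "morph g (yw m k) = yw (2*m) (2*k)"
proof (rule nth_equalityI)
  show "length (morph g (yw m k)) = length (yw (2*m) (2*k))" by (simp add: morph_g_len)
next
  fix t assume "t < length (morph g (yw m k))"
  then have t: "t div 2 < k" by (simp add: morph_g_len)
  have "morph g (yw m k) ! t = morph g (yw m k) ! (2*(t div 2) + t mod 2)" by simp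
  also have "\<dots> = g (yy (m + t div 2)) ! (t mod 2)" using t by (subst morph_g_nth) auto
  also have "\<dots> = yy (2*(m + t div 2) + t mod 2)" by (rule yy_rec[symmetric]) simp
  also have "\<dots> = yy (2*m + t)" by (simp add: algebra_simps)
  finally show "morph g (yw m k) ! t = yw (2*m) (2*k) ! t" using t by simp
qed

lemma yw_sub: "yw i 11 = take 11 (drop (i mod 2) (morph g (yw (i div 2) 11)))"
  unfolding morph_yw by (rule nth_equalityI) auto

lemma sig0: "sigma 0 = [0,0,0,1,1,0,0,1,0,1,1,0,0,0,1,1,1,0,0,1,0,1,1,0,0,1,1,1,0,0,0,1,0,1,1,1,0,0,1,0,1,1,0,0,0,1,0,1,1,1]"
  by (simp add: sigma_def str01_def)

lemma sig1: "sigma 1 = [0,0,0,1,1,0,0,1,0,1,1,0,0,0,1,0,1,1,1,0,0,1,0,1,1,0,0,1,1,1,0,0,0,1,0,1,1,0,0,0,1,1,1,0,0,1,0,1,1,1]"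
  by (simp add: sigma_def str01_def)

lemma sig2: "sigma 2 = [0,0,0,1,1,0,0,1,0,1,1,0,0,0,1,0,1,1,1,0,0,1,0,1,1,0,0,0,1,1,1,0,0,1,0,1,1,1,0,0,0,1,0,1,1,0,0,1,1,1]"
  by (simp add: sigma_def str01_def)

lemma sigtab[simp]:
  "sigma 0 ! 0 = 0"
  "sigma 0 ! 1 = 0"
  "sigma 0 ! 2 = 0"
  "sigma 0 ! 3 = 1"
  "sigma 0 ! 4 = 1"
  "sigma 0 ! 5 = 0"
  "sigma 0 ! 6 = 0"
  "sigma 0 ! 7 = 1"
  "sigma 0 ! 8 = 0"
  "sigma 0 ! 9 = 1"
  "sigma 0 ! 10 = 1"
  "sigma 0 ! 11 = 0"
  "sigma 0 ! 12 = 0"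
  "sigma 0 ! 13 = 0"
  "sigma 0 ! 14 = 1"
  "sigma 0 ! 15 = 1"
  "sigma 0 ! 16 = 1"
  "sigma 0 ! 17 = 0"
  "sigma 0 ! 18 = 0"
  "sigma 0 ! 19 = 1"
  "sigma 0 ! 20 = 0"
  "sigma 0 ! 21 = 1"
  "sigma 0 ! 22 = 1"
  "sigma 0 ! 23 = 0"
  "sigma 0 ! 24 = 0"
  "sigma 0 ! 25 = 1"
  "sigma 0 ! 26 = 1"
  "sigma 0 ! 27 = 1"
  "sigma 0 ! 28 = 0"
  "sigma 0 ! 29 = 0"
  "sigma 0 ! 30 = 0"
  "sigma 0 ! 31 = 1"
  "sigma 0 ! 32 = 0"
  "sigma 0 ! 33 = 1"
  "sigma 0 ! 34 = 1"
  "sigma 0 ! 35 = 1"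
  "sigma 0 ! 36 = 0"
  "sigma 0 ! 37 = 0"
  "sigma 0 ! 38 = 1"
  "sigma 0 ! 39 = 0"
  "sigma 0 ! 40 = 1"
  "sigma 0 ! 41 = 1"
  "sigma 0 ! 42 = 0"
  "sigma 0 ! 43 = 0"
  "sigma 0 ! 44 = 0"
  "sigma 0 ! 45 = 1"
  "sigma 0 ! 46 = 0"
  "sigma 0 ! 47 = 1"
  "sigma 0 ! 48 = 1"
  "sigma 0 ! 49 = 1"
  "sigma 0 ! (Suc 0) = 0"
  "sigma 0 ! (Suc (Suc 0)) = 0"
  "sigma 0 ! (Suc (Suc (Suc 0))) = 1"
  "sigma 0 ! (Suc (Suc (Suc (Suc 0)))) = 1"
  "sigma 1 ! 0 = 0"
  "sigma 1 ! 1 = 0"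
  "sigma 1 ! 2 = 0"
  "sigma 1 ! 3 = 1"
  "sigma 1 ! 4 = 1"
  "sigma 1 ! 5 = 0"
  "sigma 1 ! 6 = 0"
  "sigma 1 ! 7 = 1"
  "sigma 1 ! 8 = 0"
  "sigma 1 ! 9 = 1"
  "sigma 1 ! 10 = 1"
  "sigma 1 ! 11 = 0"
  "sigma 1 ! 12 = 0"
  "sigma 1 ! 13 = 0"
  "sigma 1 ! 14 = 1"
  "sigma 1 ! 15 = 0"
  "sigma 1 ! 16 = 1"
  "sigma 1 ! 17 = 1"
  "sigma 1 ! 18 = 1"
  "sigma 1 ! 19 = 0"
  "sigma 1 ! 20 = 0"
  "sigma 1 ! 21 = 1"
  "sigma 1 ! 22 = 0"
  "sigma 1 ! 23 = 1"
  "sigma 1 ! 24 = 1"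
  "sigma 1 ! 25 = 0"
  "sigma 1 ! 26 = 0"
  "sigma 1 ! 27 = 1"
  "sigma 1 ! 28 = 1"
  "sigma 1 ! 29 = 1"
  "sigma 1 ! 30 = 0"
  "sigma 1 ! 31 = 0"
  "sigma 1 ! 32 = 0"
  "sigma 1 ! 33 = 1"
  "sigma 1 ! 34 = 0"
  "sigma 1 ! 35 = 1"
  "sigma 1 ! 36 = 1"
  "sigma 1 ! 37 = 0"
  "sigma 1 ! 38 = 0"
  "sigma 1 ! 39 = 0"
  "sigma 1 ! 40 = 1"
  "sigma 1 ! 41 = 1"
  "sigma 1 ! 42 = 1"
  "sigma 1 ! 43 = 0"
  "sigma 1 ! 44 = 0"
  "sigma 1 ! 45 = 1"
  "sigma 1 ! 46 = 0"
  "sigma 1 ! 47 = 1"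
  "sigma 1 ! 48 = 1"
  "sigma 1 ! 49 = 1"
  "sigma 1 ! (Suc 0) = 0"
  "sigma 1 ! (Suc (Suc 0)) = 0"
  "sigma 1 ! (Suc (Suc (Suc 0))) = 1"
  "sigma 1 ! (Suc (Suc (Suc (Suc 0)))) = 1"
  "sigma 2 ! 0 = 0"
  "sigma 2 ! 1 = 0"
  "sigma 2 ! 2 = 0"
  "sigma 2 ! 3 = 1"
  "sigma 2 ! 4 = 1"
  "sigma 2 ! 5 = 0"
  "sigma 2 ! 6 = 0"
  "sigma 2 ! 7 = 1"
  "sigma 2 ! 8 = 0"
  "sigma 2 ! 9 = 1"
  "sigma 2 ! 10 = 1"
  "sigma 2 ! 11 = 0"
  "sigma 2 ! 12 = 0"
  "sigma 2 ! 13 = 0"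
  "sigma 2 ! 14 = 1"
  "sigma 2 ! 15 = 0"
  "sigma 2 ! 16 = 1"
  "sigma 2 ! 17 = 1"
  "sigma 2 ! 18 = 1"
  "sigma 2 ! 19 = 0"
  "sigma 2 ! 20 = 0"
  "sigma 2 ! 21 = 1"
  "sigma 2 ! 22 = 0"
  "sigma 2 ! 23 = 1"
  "sigma 2 ! 24 = 1"
  "sigma 2 ! 25 = 0"
  "sigma 2 ! 26 = 0"
  "sigma 2 ! 27 = 0"
  "sigma 2 ! 28 = 1"
  "sigma 2 ! 29 = 1"
  "sigma 2 ! 30 = 1"
  "sigma 2 ! 31 = 0"
  "sigma 2 ! 32 = 0"
  "sigma 2 ! 33 = 1"
  "sigma 2 ! 34 = 0"
  "sigma 2 ! 35 = 1"
  "sigma 2 ! 36 = 1"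
  "sigma 2 ! 37 = 1"
  "sigma 2 ! 38 = 0"
  "sigma 2 ! 39 = 0"
  "sigma 2 ! 40 = 0"
  "sigma 2 ! 41 = 1"
  "sigma 2 ! 42 = 0"
  "sigma 2 ! 43 = 1"
  "sigma 2 ! 44 = 1"
  "sigma 2 ! 45 = 0"
  "sigma 2 ! 46 = 0"
  "sigma 2 ! 47 = 1"
  "sigma 2 ! 48 = 1"
  "sigma 2 ! 49 = 1"
  "sigma 2 ! (Suc 0) = 0"
  "sigma 2 ! (Suc (Suc 0)) = 0"
  "sigma 2 ! (Suc (Suc (Suc 0))) = 1"
  "sigma 2 ! (Suc (Suc (Suc (Suc 0)))) = 1"
  "sigma (Suc 0) ! 0 = 0"
  "sigma (Suc 0) ! 1 = 0"
  "sigma (Suc 0) ! 2 = 0"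
  "sigma (Suc 0) ! 3 = 1"
  "sigma (Suc 0) ! 4 = 1"
  "sigma (Suc 0) ! 5 = 0"
  "sigma (Suc 0) ! 6 = 0"
  "sigma (Suc 0) ! 7 = 1"
  "sigma (Suc 0) ! 8 = 0"
  "sigma (Suc 0) ! 9 = 1"
  "sigma (Suc 0) ! 10 = 1"
  "sigma (Suc 0) ! 11 = 0"
  "sigma (Suc 0) ! 12 = 0"
  "sigma (Suc 0) ! 13 = 0"
  "sigma (Suc 0) ! 14 = 1"
  "sigma (Suc 0) ! 15 = 0"
  "sigma (Suc 0) ! 16 = 1"
  "sigma (Suc 0) ! 17 = 1"
  "sigma (Suc 0) ! 18 = 1"
  "sigma (Suc 0) ! 19 = 0"
  "sigma (Suc 0) ! 20 = 0"
  "sigma (Suc 0) ! 21 = 1"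
  "sigma (Suc 0) ! 22 = 0"
  "sigma (Suc 0) ! 23 = 1"
  "sigma (Suc 0) ! 24 = 1"
  "sigma (Suc 0) ! 25 = 0"
  "sigma (Suc 0) ! 26 = 0"
  "sigma (Suc 0) ! 27 = 1"
  "sigma (Suc 0) ! 28 = 1"
  "sigma (Suc 0) ! 29 = 1"
  "sigma (Suc 0) ! 30 = 0"
  "sigma (Suc 0) ! 31 = 0"
  "sigma (Suc 0) ! 32 = 0"
  "sigma (Suc 0) ! 33 = 1"
  "sigma (Suc 0) ! 34 = 0"
  "sigma (Suc 0) ! 35 = 1"
  "sigma (Suc 0) ! 36 = 1"
  "sigma (Suc 0) ! 37 = 0"
  "sigma (Suc 0) ! 38 = 0"
  "sigma (Suc 0) ! 39 = 0"
  "sigma (Suc 0) ! 40 = 1"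
  "sigma (Suc 0) ! 41 = 1"
  "sigma (Suc 0) ! 42 = 1"
  "sigma (Suc 0) ! 43 = 0"
  "sigma (Suc 0) ! 44 = 0"
  "sigma (Suc 0) ! 45 = 1"
  "sigma (Suc 0) ! 46 = 0"
  "sigma (Suc 0) ! 47 = 1"
  "sigma (Suc 0) ! 48 = 1"
  "sigma (Suc 0) ! 49 = 1"
  "sigma (Suc 0) ! (Suc 0) = 0"
  "sigma (Suc 0) ! (Suc (Suc 0)) = 0"
  "sigma (Suc 0) ! (Suc (Suc (Suc 0))) = 1"
  "sigma (Suc 0) ! (Suc (Suc (Suc (Suc 0)))) = 1"
  by (unfold sig0 sig1 sig2 One_nat_def[symmetric]) simp_all

lemma S11_closed: "list_all (\<lambda>v. take 11 (morph g v) \<in> set S11 \<and> take 11 (drop 1 (morph g v)) \<in> set S11) S11"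
  by (simp add: S11_def morph_def g_def)

lemma yy_num: "yy (numeral k) = g (yy (numeral k div 2)) ! (numeral k mod 2)"
  by (rule yy_eq)
lemma yy_1: "yy 1 = 1"
  using yy_eq[of 1] by (simp add: g_def)

lemma yy_Suc0: "yy (Suc 0) = 1"
  using yy_1 by simp

lemma upt11: "[0..<11] = [0::nat,1,2,3,4,5,6,7,8,9,10]" by code_simp

lemma yw0: "yw 0 11 = [0,1,2,0,2,3,0,1,2,3,0]"
  unfolding yw_def by (simp only: add_0 upt11 list.map) (simp add: yy_num yy_1 yy_Suc0 g_def)

lemma yw_S11: "yw i 11 \<in> set S11"
proof (induction i rule: less_induct)
  case (less i)
  show ?case
  proof (cases "i = 0")
    case True
    then show ?thesis by (simp add: yw0 S11_def)
  next
    case False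
    then have "yw (i div 2) 11 \<in> set S11" using less by simp
    then have "take 11 (morph g (yw (i div 2) 11)) \<in> set S11 \<and> take 11 (drop 1 (morph g (yw (i div 2) 11))) \<in> set S11"
      using S11_closed by (simp add: list_all_iff)
    moreover have "i mod 2 = 0 \<or> i mod 2 = 1" by auto
    ultimately show ?thesis by (auto simp: yw_sub[of i])
  qed
qed

definition V2 :: "(nat \<times> nat) list" where "V2 = [(0,1),(0,2),(1,0),(1,2),(2,0),(2,1)]"

lemma S11_facts: "list_all (\<lambda>v. (tau (v!0), tau (v!1)) \<in> set V2 \<and>
   (v!1 = 1 \<or> v!1 = 3 \<or> v!2 = 1 \<or> v!2 = 3 \<or> v!3 = 1 \<or> v!3 = 3 \<or> v!4 = 1 \<or> v!4 = 3)) S11"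
  by (simp add: S11_def V2_def tau_def)

lemma V2_fact: "(tau (yy a), tau (yy (Suc a))) \<in> set V2"
  using bspec[OF S11_facts[unfolded list_all_iff] yw_S11[of a]] by simp

lemma has13: "\<exists>j. 1 \<le> j \<and> j \<le> 4 \<and> (yy (i+j) = 1 \<or> yy (i+j) = 3)"
proof -
  have "yy (i+1) = 1 \<or> yy (i+1) = 3 \<or> yy (i+2) = 1 \<or> yy (i+2) = 3 \<or> yy (i+3) = 1 \<or> yy (i+3) = 3 \<or> yy (i+4) = 1 \<or> yy (i+4) = 3"
    using bspec[OF S11_facts[unfolded list_all_iff] yw_S11[of i]] by simp
  then show ?thesis
  proof (elim disjE)
    assume "yy (i+1) = 1" then show ?thesis by (intro exI[of _ 1]) simp
  next
    assume "yy (i+1) = 3" then show ?thesis by (intro exI[of _ 1]) simp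
  next
    assume "yy (i+2) = 1" then show ?thesis by (intro exI[of _ 2]) simp
  next
    assume "yy (i+2) = 3" then show ?thesis by (intro exI[of _ 2]) simp
  next
    assume "yy (i+3) = 1" then show ?thesis by (intro exI[of _ 3]) simp
  next
    assume "yy (i+3) = 3" then show ?thesis by (intro exI[of _ 3]) simp
  next
    assume "yy (i+4) = 1" then show ?thesis by (intro exI[of _ 4]) simp
  next
    assume "yy (i+4) = 3" then show ?thesis by (intro exI[of _ 4]) simp
  qed
qed

lemma yy13_odd: "yy k = 1 \<or> yy k = 3 \<Longrightarrow> odd k"
proof (rule ccontr)
  assume "yy k = 1 \<or> yy k = 3" "\<not> odd k"
  then obtain m where "k = 2*m + 0" by auto
  then have "yy k = g (yy m) ! 0" using yy_rec[of 0 m] by simp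
  then show False using \<open>yy k = 1 \<or> yy k = 3\<close> by (simp add: g_def split: if_splits)
qed

definition pat :: "(nat \<Rightarrow> nat \<Rightarrow> bool) \<Rightarrow> (nat \<Rightarrow> nat \<Rightarrow> bool) \<Rightarrow> (nat \<Rightarrow> nat \<Rightarrow> bool) \<Rightarrow> nat \<Rightarrow> nat \<Rightarrow> nat \<Rightarrow> bool" where
  "pat A M B i p n \<longleftrightarrow> 1 \<le> n \<and> A (yy i) (yy (i+p)) \<and>
     (\<forall>j. 0 < j \<and> j < n - 1 \<longrightarrow> M (yy (i+j)) (yy (i+j+p))) \<and> B (yy (i+n-1)) (yy (i+n-1+p))"

definition lift :: "(nat \<Rightarrow> nat \<Rightarrow> bool) \<Rightarrow> (nat \<Rightarrow> nat \<Rightarrow> bool) \<Rightarrow> nat \<Rightarrow> nat \<Rightarrow> bool" where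
  "lift R1 R2 x z \<longleftrightarrow> R1 (g x ! 0) (g z ! 0) \<and> R2 (g x ! 1) (g z ! 1)"

definition TOP :: "nat \<Rightarrow> nat \<Rightarrow> bool" where "TOP x z = True"

lemma lift_yy: "lift R1 R2 (yy m) (yy (m+q)) \<longleftrightarrow>
   R1 (yy (2*m)) (yy (2*m+2*q)) \<and> R2 (yy (2*m+1)) (yy (2*m+1+2*q))"
proof -
  have a: "g (yy m) ! 0 = yy (2*m)" "g (yy m) ! 1 = yy (2*m+1)"
    using yy_rec[of 0 m] yy_rec[of 1 m] by simp_all
  have b: "g (yy (m+q)) ! 0 = yy (2*m+2*q)" "g (yy (m+q)) ! 1 = yy (2*m+1+2*q)"
    using yy_rec[of 0 "m+q"] yy_rec[of 1 "m+q"] by (simp_all add: algebra_simps)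
  show ?thesis unfolding lift_def a b ..
qed

lemma descent:
  assumes P: "pat A M B i (2*q) n" and n3: "3 \<le> n"
  shows "pat (if even i then lift A M else lift TOP A) (lift M M)
             (if even (i+n-1) then lift B TOP else lift M B)
             (i div 2) q ((i+n-1) div 2 - i div 2 + 1)"
proof -
  define i' where "i' = i div 2"
  define e where "e = i+n-1"
  define e' where "e' = e div 2"
  have Ai: "A (yy i) (yy (i+2*q))" and Mj: "\<And>j. 0 < j \<Longrightarrow> j < n - 1 \<Longrightarrow> M (yy (i+j)) (yy (i+j+2*q))"
    and Be: "B (yy e) (yy (e+2*q))"
    using P unfolding pat_def e_def by auto
  have ie: "i' \<le> e'" using n3 unfolding i'_def e'_def e_def by (simp add: div_le_mono)
  have first: "(if even i then lift A M else lift TOP A) (yy i') (yy (i'+q))"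
  proof (cases "even i")
    case True
    then have i: "i = 2*i'" unfolding i'_def by simp
    have "M (yy (i+1)) (yy (i+1+2*q))" using Mj[of 1] n3 by simp
    then show ?thesis using True Ai i by (simp add: lift_yy)
  next
    case False
    then have i: "i = 2*i'+1" unfolding i'_def by simp
    show ?thesis using False Ai i by (simp add: lift_yy TOP_def)
  qed
  have last: "(if even e then lift B TOP else lift M B) (yy e') (yy (e'+q))"
  proof (cases "even e")
    case True
    then have ee: "e = 2*e'" unfolding e'_def by simp
    show ?thesis using True Be ee by (simp add: lift_yy TOP_def)
  next
    case False
    then have ee: "e = 2*e'+1" unfolding e'_def by simp
    have "M (yy (i+(n-2))) (yy (i+(n-2)+2*q))" using Mj[of "n-2"] n3 by simp
    moreover have "i + (n-2) = 2*e'" using ee n3 unfolding e_def by simp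
    ultimately show ?thesis using False Be ee by (simp add: lift_yy)
  qed
  have mid: "lift M M (yy (i'+t)) (yy (i'+t+q))" if t: "0 < t" "t < (e' - i' + 1) - 1" for t
  proof -
    have i2: "i \<le> 2*i'+1" unfolding i'_def by simp
    have "2*e' \<le> e" unfolding e'_def by simp
    then have lo: "0 < 2*(i'+t) - i" "2*(i'+t) - i < n - 1" and hi: "2*(i'+t) + 1 - i < n - 1"
      using t i2 n3 unfolding e_def by auto
    have "M (yy (i + (2*(i'+t) - i))) (yy (i + (2*(i'+t) - i) + 2*q))" using Mj lo by blast
    moreover have "M (yy (i + (2*(i'+t)+1 - i))) (yy (i + (2*(i'+t)+1 - i) + 2*q))"
      using Mj[of "2*(i'+t)+1 - i"] hi lo by simp
    moreover have "i + (2*(i'+t) - i) = 2*(i'+t)" "i + (2*(i'+t)+1 - i) = 2*(i'+t)+1" using i2 t by auto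
    ultimately show ?thesis by (simp add: lift_yy)
  qed
  have "i' + (e' - i' + 1) - 1 = e'" using ie by simp
  then show ?thesis unfolding pat_def using first last mid
    unfolding i'_def[symmetric] e_def[symmetric] e'_def[symmetric]
    by (auto simp: add.assoc)
qed

lemma pat_mono:
  assumes "pat A M B i p n"
    and "\<And>x z. x < 4 \<Longrightarrow> z < 4 \<Longrightarrow> A x z \<Longrightarrow> A2 x z"
    and "\<And>x z. x < 4 \<Longrightarrow> z < 4 \<Longrightarrow> M x z \<Longrightarrow> M2 x z"
    and "\<And>x z. x < 4 \<Longrightarrow> z < 4 \<Longrightarrow> B x z \<Longrightarrow> B2 x z"
  shows "pat A2 M2 B2 i p n"
  using assms yy_lt4 unfolding pat_def by blast

definition rT :: "nat \<Rightarrow> nat \<Rightarrow> bool" where "rT x z \<longleftrightarrow> tau x = tau z"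
definition rEQ :: "nat \<Rightarrow> nat \<Rightarrow> bool" where "rEQ x z \<longleftrightarrow> x = z"
definition rA :: "nat \<Rightarrow> nat \<Rightarrow> bool" where "rA x z \<longleftrightarrow> x = z \<or> ((x = 0 \<or> x = 2) \<and> (z = 0 \<or> z = 2))"
definition rB :: "nat \<Rightarrow> nat \<Rightarrow> bool" where
  "rB x z \<longleftrightarrow> x = z \<or> (x = 0 \<and> z = 3) \<or> (x = 3 \<and> z = 0) \<or> (x = 1 \<and> z = 2) \<or> (x = 2 \<and> z = 1)"

lemma four: "x < (4::nat) \<Longrightarrow> x = 0 \<or> x = 1 \<or> x = 2 \<or> x = 3" by auto

lemmas rdefs = lift_def g_def tau_def rT_def rEQ_def rA_def rB_def TOP_def

lemma L_TT: "x < 4 \<Longrightarrow> z < 4 \<Longrightarrow> lift rT rT x z \<Longrightarrow> rEQ x z"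
  using four[of x] four[of z] by (auto simp: rdefs)
lemma L_EE: "x < 4 \<Longrightarrow> z < 4 \<Longrightarrow> lift rEQ rEQ x z \<Longrightarrow> rEQ x z"
  using four[of x] four[of z] by (auto simp: rdefs)
lemma L_OT: "x < 4 \<Longrightarrow> z < 4 \<Longrightarrow> lift TOP rT x z \<Longrightarrow> rA x z"
  using four[of x] four[of z] by (auto simp: rdefs)
lemma L_TO: "x < 4 \<Longrightarrow> z < 4 \<Longrightarrow> lift rT TOP x z \<Longrightarrow> rB x z"
  using four[of x] four[of z] by (auto simp: rdefs)
lemma L_OE: "x < 4 \<Longrightarrow> z < 4 \<Longrightarrow> lift TOP rEQ x z \<Longrightarrow> rEQ x z"
  using four[of x] four[of z] by (auto simp: rdefs)
lemma L_EO: "x < 4 \<Longrightarrow> z < 4 \<Longrightarrow> lift rEQ TOP x z \<Longrightarrow> rB x z"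
  using four[of x] four[of z] by (auto simp: rdefs)
lemma L_AE: "x < 4 \<Longrightarrow> z < 4 \<Longrightarrow> lift rA rEQ x z \<Longrightarrow> rEQ x z"
  using four[of x] four[of z] by (auto simp: rdefs)
lemma L_BO: "x < 4 \<Longrightarrow> z < 4 \<Longrightarrow> lift rB TOP x z \<Longrightarrow> rB x z"
  using four[of x] four[of z] by (auto simp: rdefs)
lemma L_OA: "x < 4 \<Longrightarrow> z < 4 \<Longrightarrow> lift TOP rA x z \<Longrightarrow> rT x z"
  using four[of x] four[of z] by (auto simp: rdefs)
lemma L_EB: "x < 4 \<Longrightarrow> z < 4 \<Longrightarrow> lift rEQ rB x z \<Longrightarrow> rB x z"
  using four[of x] four[of z] by (auto simp: rdefs)
lemma L_TE: "x < 4 \<Longrightarrow> z < 4 \<Longrightarrow> lift rT rEQ x z \<Longrightarrow> rEQ x z"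
  using four[of x] four[of z] by (auto simp: rdefs)

definition patL :: "(nat \<Rightarrow> nat \<Rightarrow> bool) \<Rightarrow> (nat \<Rightarrow> nat \<Rightarrow> bool) \<Rightarrow> (nat \<Rightarrow> nat \<Rightarrow> bool) \<Rightarrow> nat list \<Rightarrow> nat \<Rightarrow> nat \<Rightarrow> bool" where
  "patL A M B v p n \<longleftrightarrow> A (v!0) (v!p) \<and> list_all (\<lambda>j. M (v!j) (v!(j+p))) [1..<n-1] \<and> B (v!(n-1)) (v!(n-1+p))"

lemma pat_patL: "pat A M B i p n \<Longrightarrow> n + p \<le> 11 \<Longrightarrow> patL A M B (yw i 11) p n"
  unfolding pat_def patL_def list_all_iff by (auto simp: add.assoc)

lemma base_check: "list_all (\<lambda>v. list_all (\<lambda>p. \<not> patL rT rT rT v p p \<and> \<not> patL rEQ rEQ rEQ v p p \<and>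
   \<not> patL rA rEQ rB v p (p+1) \<and> \<not> patL rT rEQ rB v p (p+1) \<and> \<not> patL rEQ rEQ rB v p (p+1)) [1,2,3,4,5]) S11"
  by code_simp

lemma tau13: "x < 4 \<Longrightarrow> tau x = 1 \<longleftrightarrow> x = 1 \<or> x = 3"
  using four[of x] by (auto simp: tau_def)

lemma even_of_pat:
  assumes P: "pat A M B i p n" and n6: "6 \<le> n" and MT: "\<And>x z. M x z \<Longrightarrow> tau x = tau z"
  shows "even p"
proof -
  obtain j where j: "1 \<le> j" "j \<le> 4" "yy (i+j) = 1 \<or> yy (i+j) = 3" using has13[of i] by blast
  have "M (yy (i+j)) (yy (i+j+p))" using P j n6 unfolding pat_def by auto
  then have "tau (yy (i+j)) = tau (yy (i+j+p))" by (rule MT)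
  then have "yy (i+j+p) = 1 \<or> yy (i+j+p) = 3" using j(3) tau13 yy_lt4 by metis
  then have "odd (i+j+p)" by (rule yy13_odd)
  moreover have "odd (i+j)" using j(3) by (rule yy13_odd)
  ultimately show ?thesis by simp
qed

lemma arith1: "1 \<le> q \<Longrightarrow> even (i::nat) \<Longrightarrow> (i + 2*q - 1) div 2 - i div 2 + 1 = q \<and> \<not> even (i + 2*q - 1)"
  by (auto elim!: evenE)
lemma arith2: "1 \<le> q \<Longrightarrow> odd (i::nat) \<Longrightarrow> (i + 2*q - 1) div 2 - i div 2 + 1 = q + 1 \<and> even (i + 2*q - 1)"
  by (auto elim!: oddE)
lemma arith3: "even (i::nat) \<Longrightarrow> (i + (2*q+1) - 1) div 2 - i div 2 + 1 = q + 1 \<and> even (i + (2*q+1) - 1)"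
  by (auto elim!: evenE)
lemma arith4: "odd (i::nat) \<Longrightarrow> (i + (2*q+1) - 1) div 2 - i div 2 + 1 = q + 1 \<and> \<not> even (i + (2*q+1) - 1)"
  by (auto elim!: oddE)

lemma no_pat:
  "1 \<le> p \<Longrightarrow> \<not> pat rT rT rT i p p \<and> \<not> pat rEQ rEQ rEQ i p p \<and> \<not> pat rA rEQ rB i p (p+1)
     \<and> \<not> pat rT rEQ rB i p (p+1) \<and> \<not> pat rEQ rEQ rB i p (p+1)"
proof (induction p arbitrary: i rule: less_induct)
  case (less p)
  show ?case
  proof (cases "p \<le> 5")
    case True
    then have pin: "p \<in> set [1,2,3,4,5]" using less.prems by auto
    have "\<not> patL rT rT rT (yw i 11) p p \<and> \<not> patL rEQ rEQ rEQ (yw i 11) p p \<and>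
      \<not> patL rA rEQ rB (yw i 11) p (p+1) \<and> \<not> patL rT rEQ rB (yw i 11) p (p+1) \<and> \<not> patL rEQ rEQ rB (yw i 11) p (p+1)"
      using bspec[OF bspec[OF base_check[unfolded list_all_iff] yw_S11[of i]] pin] by simp
    moreover have "p + p \<le> 11" "p + 1 + p \<le> 11" using True by auto
    ultimately show ?thesis using pat_patL by blast
  next
    case False
    then have p6: "6 \<le> p" by simp
    have MT1: "\<And>x z. rT x z \<Longrightarrow> tau x = tau z" by (simp add: rT_def)
    have MT2: "\<And>x z. rEQ x z \<Longrightarrow> tau x = tau z" by (simp add: rEQ_def)
    have ev: "even p" if "pat A M B j p n" "p \<le> n" "\<And>x z. M x z \<Longrightarrow> tau x = tau z" for A M B j n
      using even_of_pat[OF that(1) _ that(3)] that(2) p6 by simp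
    show ?thesis
    proof (intro conjI notI)
      assume P: "pat rT rT rT i p p"
      then have "even p" using ev MT1 by blast
      then obtain q where pq: "p = 2*q" by blast
      then have q: "1 \<le> q" "q < p" using p6 by auto
      have D: "pat (if even i then lift rT rT else lift TOP rT) (lift rT rT) (if even (i+p-1) then lift rT TOP else lift rT rT)
         (i div 2) q ((i+p-1) div 2 - i div 2 + 1)" using descent[of rT rT rT i q p] P pq p6 by simp
      show False
      proof (cases "even i")
        case True
        with D arith1[OF q(1) True] pq have "pat (lift rT rT) (lift rT rT) (lift rT rT) (i div 2) q q" by simp
        then have "pat rEQ rEQ rEQ (i div 2) q q" by (rule pat_mono) (auto intro: L_TT)
        then show False using less.IH[OF q(2) q(1)] by blast
      next
        case False
        with D arith2[OF q(1) False] pq have "pat (lift TOP rT) (lift rT rT) (lift rT TOP) (i div 2) q (q+1)" by simp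
        then have "pat rA rEQ rB (i div 2) q (q+1)" by (rule pat_mono) (auto intro: L_TT L_OT L_TO)
        then show False using less.IH[OF q(2) q(1)] by blast
      qed
    next
      assume P: "pat rEQ rEQ rEQ i p p"
      then have "even p" using ev MT2 by blast
      then obtain q where pq: "p = 2*q" by blast
      then have q: "1 \<le> q" "q < p" using p6 by auto
      have D: "pat (if even i then lift rEQ rEQ else lift TOP rEQ) (lift rEQ rEQ) (if even (i+p-1) then lift rEQ TOP else lift rEQ rEQ)
         (i div 2) q ((i+p-1) div 2 - i div 2 + 1)" using descent[of rEQ rEQ rEQ i q p] P pq p6 by simp
      show False
      proof (cases "even i")
        case True
        with D arith1[OF q(1) True] pq have "pat (lift rEQ rEQ) (lift rEQ rEQ) (lift rEQ rEQ) (i div 2) q q" by simp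
        then have "pat rEQ rEQ rEQ (i div 2) q q" by (rule pat_mono) (auto intro: L_EE)
        then show False using less.IH[OF q(2) q(1)] by blast
      next
        case False
        with D arith2[OF q(1) False] pq have "pat (lift TOP rEQ) (lift rEQ rEQ) (lift rEQ TOP) (i div 2) q (q+1)" by simp
        then have "pat rEQ rEQ rB (i div 2) q (q+1)" by (rule pat_mono) (auto intro: L_EE L_OE L_EO)
        then show False using less.IH[OF q(2) q(1)] by blast
      qed
    next
      assume P: "pat rA rEQ rB i p (p+1)"
      then have "even p" using ev MT2 by fastforce
      then obtain q where pq: "p = 2*q" by blast
      then have q: "1 \<le> q" "q < p" using p6 by auto
      have D: "pat (if even i then lift rA rEQ else lift TOP rA) (lift rEQ rEQ) (if even (i+(p+1)-1) then lift rB TOP else lift rEQ rB)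
         (i div 2) q ((i+(p+1)-1) div 2 - i div 2 + 1)" using descent[of rA rEQ rB i q "p+1"] P pq p6 by simp
      show False
      proof (cases "even i")
        case True
        with D arith3[OF True, of q] pq have "pat (lift rA rEQ) (lift rEQ rEQ) (lift rB TOP) (i div 2) q (q+1)" by simp
        then have "pat rEQ rEQ rB (i div 2) q (q+1)" by (rule pat_mono) (auto intro: L_EE L_AE L_BO)
        then show False using less.IH[OF q(2) q(1)] by blast
      next
        case False
        with D arith4[OF False, of q] pq have "pat (lift TOP rA) (lift rEQ rEQ) (lift rEQ rB) (i div 2) q (q+1)" by simp
        then have "pat rT rEQ rB (i div 2) q (q+1)" by (rule pat_mono) (auto intro: L_EE L_OA L_EB)
        then show False using less.IH[OF q(2) q(1)] by blast
      qed
    next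
      assume P: "pat rT rEQ rB i p (p+1)"
      then have "even p" using ev MT2 by fastforce
      then obtain q where pq: "p = 2*q" by blast
      then have q: "1 \<le> q" "q < p" using p6 by auto
      have D: "pat (if even i then lift rT rEQ else lift TOP rT) (lift rEQ rEQ) (if even (i+(p+1)-1) then lift rB TOP else lift rEQ rB)
         (i div 2) q ((i+(p+1)-1) div 2 - i div 2 + 1)" using descent[of rT rEQ rB i q "p+1"] P pq p6 by simp
      show False
      proof (cases "even i")
        case True
        with D arith3[OF True, of q] pq have "pat (lift rT rEQ) (lift rEQ rEQ) (lift rB TOP) (i div 2) q (q+1)" by simp
        then have "pat rEQ rEQ rB (i div 2) q (q+1)" by (rule pat_mono) (auto intro: L_EE L_TE L_BO)
        then show False using less.IH[OF q(2) q(1)] by blast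
      next
        case False
        with D arith4[OF False, of q] pq have "pat (lift TOP rT) (lift rEQ rEQ) (lift rEQ rB) (i div 2) q (q+1)" by simp
        then have "pat rA rEQ rB (i div 2) q (q+1)" by (rule pat_mono) (auto intro: L_EE L_OT L_EB)
        then show False using less.IH[OF q(2) q(1)] by blast
      qed
    next
      assume P: "pat rEQ rEQ rB i p (p+1)"
      then have "even p" using ev MT2 by fastforce
      then obtain q where pq: "p = 2*q" by blast
      then have q: "1 \<le> q" "q < p" using p6 by auto
      have D: "pat (if even i then lift rEQ rEQ else lift TOP rEQ) (lift rEQ rEQ) (if even (i+(p+1)-1) then lift rB TOP else lift rEQ rB)
         (i div 2) q ((i+(p+1)-1) div 2 - i div 2 + 1)" using descent[of rEQ rEQ rB i q "p+1"] P pq p6 by simp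
      show False
      proof (cases "even i")
        case True
        with D arith3[OF True, of q] pq have "pat (lift rEQ rEQ) (lift rEQ rEQ) (lift rB TOP) (i div 2) q (q+1)" by simp
        then have "pat rEQ rEQ rB (i div 2) q (q+1)" by (rule pat_mono) (auto intro: L_EE L_BO)
        then show False using less.IH[OF q(2) q(1)] by blast
      next
        case False
        with D arith4[OF False, of q] pq have "pat (lift TOP rEQ) (lift rEQ rEQ) (lift rEQ rB) (i div 2) q (q+1)" by simp
        then have "pat rEQ rEQ rB (i div 2) q (q+1)" by (rule pat_mono) (auto intro: L_EE L_OE L_EB)
        then show False using less.IH[OF q(2) q(1)] by blast
      qed
    qed
  qed
qed

lemma vtm_sqfree:
  assumes "1 \<le> p" "\<forall>k<p. tau (yy (c+k)) = tau (yy (c+k+p))"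
  shows False
proof -
  have "tau (yy (c+(p-1))) = tau (yy (c+(p-1)+p))" using assms(2)[rule_format, of "p-1"] assms(1) by simp
  moreover have "c+(p-1) = c+p-1" using assms(1) by simp
  ultimately have "pat rT rT rT c p p" unfolding pat_def rT_def using assms
    by (auto simp: add.assoc)
  then show False using no_pat[OF assms(1)] by blast
qed

definition syncf :: "(nat \<Rightarrow> nat) \<Rightarrow> nat" where
  "syncf u = (if u 20 = 0 then (if u 21 = 0 then (if u 16 = 0 then (if u 23 = 0 then (if u 4 = 0 then (if u 11 = 0 then (if u 14 = 0 then (if u 0 = 0 then 11 else 47) else 35) else (if u 7 = 0 then 16 else 42)) else (if u 12 = 0 then 49 else 23)) else (if u 5 = 0 then (if u 0 = 0 then (if u 2 = 0 then 6 else 8) else 10) else (if u 19 = 0 then (if u 7 = 0 then 18 else 42) else (if u 0 = 0 then 30 else (if u 7 = 0 then 18 else 30))))) else (if u 10 = 0 then (if u 5 = 0 then (if u 8 = 0 then 3 else 41) else (if u 0 = 0 then 5 else 22)) else (if u 2 = 0 then (if u 0 = 0 then (if u 4 = 0 then 11 else 25) else (if u 4 = 0 then 9 else 17)) else (if u 23 = 0 then 19 else 31)))) else (if u 14 = 0 then (if u 22 = 0 then (if u 13 = 0 then (if u 0 = 0 then 12 else (if u 1 = 0 then (if u 3 = 0 then 10 else 24) else 48)) else (if u 3 = 0 then 36 else 20)) else (if u 1 = 0 then (if u 16 = 0 then (if u 0 = 0 then 26 else 4) else 38) else (if u 9 = 0 then 6 else 32))) else (if u 8 = 0 then (if u 11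 = 0 then (if u 2 = 0 then 0 else (if u 0 = 0 then (if u 1 = 0 then 12 else 26) else 14)) else (if u 3 = 0 then 43 else (if u 0 = 0 then 24 else 7))) else (if u 1 = 0 then (if u 16 = 0 then 45 else (if u 18 = 0 then 19 else 17)) else (if u 16 = 0 then (if u 0 = 0 then 22 else 26) else 2))))) else (if u 19 = 0 then (if u 13 = 0 then (if u 21 = 0 then (if u 12 = 0 then (if u 1 = 0 then (if u 0 = 0 then (if u 2 = 0 then 11 else 25) else 49) else 13) else (if u 2 = 0 then 37 else 21)) else (if u 0 = 0 then (if u 15 = 0 then (if u 1 = 0 then 5 else 27) else 39) else (if u 8 = 0 then 7 else 33))) else (if u 7 = 0 then (if u 10 = 0 then (if u 1 = 0 then 1 else (if u 0 = 0 then (if u 12 = 0 then 15 else (if u 22 = 0 then 15 else 13)) else 27)) else (if u 2 = 0 then 44 else (if u 0 = 0 then 8 else 25))) else (if u 0 = 0 then (if u 15 = 0 then 46 else (if u 17 = 0 then 20 else 18)) else (if u 15 = 0 then (if u 1 = 0 then 27 else 23) else 3)))) else (if u 18 = 0 then (if u 12 = 0 then (if u 14 = 0 then (if u 0 = 0 then (if u 2 = 0 then 6 else 8) else 28) else (if u 15 = 0 then 40 else 34)) else (if u 2 = 0 then (if u 7 = 0 then (if u 3 = 0 then (if u 1 = 0 then 24 else 21) else 4) else (if u 9 = 0 then 28 else 9)) else (if u 5 = 0 then (if u 1 = 0 then (if u 4 = 0 then 21 else 45) else 47) else (if u 0 = 0 then 2 else (if u 11 = 0 then 16 else (if u 21 =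 0 then 16 else 14)))))) else (if u 4 = 0 then (if u 2 = 0 then (if u 6 = 0 then 9 else 48) else (if u 0 = 0 then (if u 3 = 0 then 22 else 46) else 7)) else (if u 23 = 0 then (if u 1 = 0 then 29 else (if u 8 = 0 then 17 else 29)) else (if u 1 = 0 then 10 else 15))))))"

definition certD :: "nat \<Rightarrow> nat \<Rightarrow> nat \<Rightarrow> nat list" where
  "certD x z p = (if x = 0 \<and> z = 1 then (if p = 3 then [1,3,6,9,12,15,18,21,24,27,30,33,34,37,40,42,44,47,50] else (if p = 4 then [0,4,7,11,14,18,19,23,26,30,33,37,40,44,48,50] else (if p = 5 then [3,7,11,15,20,25,30,34,38,43,47,52] else (if p = 6 then [1,7,13,14,20,26,32,38,43,49] else (if p = 7 then [4,10,16,22,28,35,42,49] else (if p = 8 then [6,13,21,23,31,39,47,54] else (if p = 9 then [6,15,24,33,41,50] else (if p = 10 then [7,17,27,37,45,53] else (if p = 11 then [9,20,31,42,47,56] else (if p = 12 then [2,13,25,37,49] else (if p = 13 then [12,20,33,46,59] else (if p = 14 then [13,25,39,52] else (if p = 15 then [14,27,42,57] else (if p = 16 then [14,29,45,61] else (if p = 17 then [15,32,48,64] else (if p = 18 then [17,34,50] else (if p = 19 then [12,31,33,52] else (if p = 20 then [19,39,58] else (if p = 21 then [20,41,62] else (if p = 22 then [21,42,63] else (if p = 23 then [21,44,66] else []))))))))))))))))))))) else (if x = 0 \<and> z = 2 then (if p = 3 then [1,3,6,9,12,15,18,21,24,27,30,33,34,37,40,42,44,47,50] else (if p = 4 then [0,4,7,11,14,18,19,23,26,30,33,37,40,44,48,50]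 else (if p = 5 then [3,7,11,15,20,25,30,34,38,43,47,52] else (if p = 6 then [1,7,13,14,20,26,32,38,43,49] else (if p = 7 then [4,10,16,22,28,35,42,49] else (if p = 8 then [6,13,21,23,31,39,47,54] else (if p = 9 then [6,15,24,33,41,50] else (if p = 10 then [7,17,27,37,45,53] else (if p = 11 then [9,20,31,42,47,56] else (if p = 12 then [2,13,25,37,49] else (if p = 13 then [12,20,33,46,59] else (if p = 14 then [13,25,39,52] else (if p = 15 then [14,27,42,57] else (if p = 16 then [14,29,45,60] else (if p = 17 then [15,32,48,64] else (if p = 18 then [17,34,50] else (if p = 19 then [12,31,33,52] else (if p = 20 then [19,39,58] else (if p = 21 then [20,41,62] else (if p = 22 then [21,42,63] else (if p = 23 then [21,44,67] else []))))))))))))))))))))) else (if x = 1 \<and> z = 0 then (if p = 3 then [1,3,6,9,11,13,16,17,20,23,26,29,32,35,38,41,44,47,50] else (if p = 4 then [0,4,7,9,13,16,20,21,25,28,32,35,38,42,44,48,50] else (if p = 5 then [3,7,12,17,22,27,31,33,37,41,45,47,52] else (if p = 6 then [1,7,12,16,22,28,34,40,45,51] else (if p = 7 then [4,11,18,24,27,34,38,45,52] else (if p = 8 then [7,15,23,29,37,42,48,56] else (if p = 9 then [8,17,26,35,44,53] else (if p = 10 then [9,19,29,39,48,57] else (if p = 11 then [9,14,25,35,46,57] else (if p = 12 then [11,18,30,40,52] else (if p = 13 then [11,24,34,46,58] else (if p = 14 then [13,26,39,53] else (if p = 15 then [13,28,41,56] else (if p = 16 then [14,28,44,57] else (if p =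 17 then [14,31,45,58] else (if p = 18 then [16,33,51] else (if p = 19 then [18,36,54] else (if p = 20 then [18,37,56] else (if p = 21 then [20,41,62] else (if p = 22 then [21,43,65] else (if p = 23 then [22,45,68] else []))))))))))))))))))))) else (if x = 1 \<and> z = 2 then (if p = 3 then [1,3,6,9,11,13,16,17,20,23,26,29,32,35,38,41,44,47,50] else (if p = 4 then [0,4,7,9,13,16,20,21,25,28,32,35,38,42,44,48,50] else (if p = 5 then [3,7,12,17,22,27,31,33,37,41,45,47,52] else (if p = 6 then [1,7,12,16,22,28,34,40,45,51] else (if p = 7 then [4,11,18,24,27,34,38,45,52] else (if p = 8 then [7,15,23,29,37,42,48,56] else (if p = 9 then [8,17,26,35,44,53] else (if p = 10 then [9,19,29,39,48,58] else (if p = 11 then [9,14,25,35,46,56] else (if p = 12 then [11,18,30,40,52] else (if p = 13 then [11,24,34,46,59] else (if p = 14 then [13,26,39,52] else (if p = 15 then [13,28,41,56] else (if p = 16 then [14,28,44,60] else (if p = 17 then [14,31,48,64] else (if p = 18 then [16,33,50] else (if p = 19 then [18,36,55] else (if p = 20 then [18,37,57] else (if p = 21 then [20,41,62] else (if p = 22 then [21,41,63] else (if p = 23 then [22,44,67] else []))))))))))))))))))))) else (if x = 2 \<and> z = 0 then (if p = 3 then [1,3,6,9,11,13,16,17,20,23,26,29,32,35,38,40,43,46,49] else (if p = 4 then [0,4,7,9,13,16,20,23,26,30,32,36,40,41,45,48,50] else (if p = 5 then [3,7,12,17,21,25,29,33,38,42,47,52] else (if p = 6 then [1,7,12,16,22,28,33,38,44,49]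 else (if p = 7 then [4,11,18,24,26,33,40,46,52] else (if p = 8 then [7,15,23,30,37,45,53] else (if p = 9 then [8,17,26,34,43,51] else (if p = 10 then [9,19,29,39,48,57] else (if p = 11 then [9,19,29,38,47,58] else (if p = 12 then [11,14,25,33,45,52] else (if p = 13 then [11,22,34,46,58] else (if p = 14 then [2,15,28,41,55] else (if p = 15 then [13,26,41,56] else (if p = 16 then [13,29,38,54] else (if p = 17 then [14,31,44,58] else (if p = 18 then [16,33,51] else (if p = 19 then [11,25,44,62] else (if p = 20 then [18,36,56] else (if p = 21 then [20,41,62] else (if p = 22 then [19,41,63] else (if p = 23 then [20,42,64] else []))))))))))))))))))))) else (if x = 2 \<and> z = 1 then (if p = 3 then [1,3,6,9,11,13,16,17,20,23,26,29,32,35,38,40,43,46,49] else (if p = 4 then [0,4,7,9,13,16,20,23,26,30,32,36,40,41,45,48,50] else (if p = 5 then [3,7,12,17,21,25,29,33,38,42,47,52] else (if p = 6 then [1,7,12,16,22,28,33,38,44,49] else (if p = 7 then [4,11,18,24,26,33,40,46,52] else (if p = 8 then [7,15,23,30,37,45,53] else (if p = 9 then [8,17,26,34,43,51] else (if p = 10 then [9,19,29,39,48,58] else (if p = 11 then [9,19,29,38,47,56] else (if p = 12 then [11,14,25,33,45,57] else (if p = 13 then [11,22,34,46,59] else (if p = 14 then [2,15,28,41,52] else (if p = 15 then [13,26,41,56] else (if p = 16 then [13,29,38,54] else (if p = 17 then [14,31,48,64] else (if p = 18 then [16,33,50] else (if p = 19 then [11,25,44,58] else (if p = 20 then [18,36,51]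 else (if p = 21 then [20,41,62] else (if p = 22 then [19,41,63] else (if p = 23 then [20,35,57] else []))))))))))))))))))))) else []))))))"

lemma syncf_cong: "(\<And>j. j < 24 \<Longrightarrow> u j = v j) \<Longrightarrow> syncf u = syncf v"
  unfolding syncf_def by (simp only: cong: if_cong)

lemma sync_check: "list_all (\<lambda>(x,z). list_all (\<lambda>b. syncf (\<lambda>j. cat x z (b+j)) = b) [0,1,2,3,4,5,6,7,8,9,10,11,12,13,14,15,16,17,18,19,20,21,22,23,24,25,26,27,28,29,30,31,32,33,34,35,36,37,38,39,40,41,42,43,44,45,46,47,48,49]) V2"
  by (simp add: V2_def syncf_def cat_def)

fun cov :: "nat \<Rightarrow> nat list \<Rightarrow> nat \<Rightarrow> bool" where
  "cov p [] b = (50 \<le> b)"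
| "cov p (d#ds) b = (b \<le> d \<and> d < b + p \<and> cov p ds (Suc d))"

lemma cov_sound: "cov p ds b \<Longrightarrow> b \<le> b' \<Longrightarrow> b' < 50 \<Longrightarrow> \<exists>d\<in>set ds. b' \<le> d \<and> d < b' + p"
proof (induction ds arbitrary: b)
  case Nil then show ?case by simp
next
  case (Cons d ds)
  show ?case
  proof (cases "b' \<le> d")
    case True then show ?thesis using Cons.prems by auto
  next
    case False then show ?thesis using Cons.prems Cons.IH[of "Suc d"] by auto
  qed
qed

lemma cov_check: "list_all (\<lambda>(x,z). list_all (\<lambda>p. cov p (certD x z p) 0 \<and>
     list_all (\<lambda>d. cat x z d \<noteq> cat x z (d+p)) (certD x z p)) [3,4,5,6,7,8,9,10,11,12,13,14,15,16,17,18,19,20,21,22,23]) V2"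
  by (simp add: V2_def certD_def cat_def)

lemma win_check: "list_all (\<lambda>(x,z). list_all (\<lambda>b. cat x z b = cat x z (b+2) \<and> cat x z (b+1) = cat x z (b+3) \<longrightarrow>
     cat x z b = 0 \<and> cat x z (b+1) = 1) [0,1,2,3,4,5,6,7,8,9,10,11,12,13,14,15,16,17,18,19,20,21,22,23,24,25,26,27,28,29,30,31,32,33,34,35,36,37,38,39,40,41,42,43,44,45,46,47,48,49]) V2"
  by (simp add: V2_def cat_def)

lemma three: "x < (3::nat) \<Longrightarrow> x = 0 \<or> x = 1 \<or> x = 2" by auto

lemma pre28: assumes "x < 3" "x' < 3" "\<And>k. k < 28 \<Longrightarrow> sigma x ! k = sigma x' ! k" shows "x = x'"
proof -
  have "sigma x ! 15 = sigma x' ! 15" "sigma x ! 27 = sigma x' ! 27" using assms(3) by simp_all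
  then show ?thesis using three[OF assms(1)] three[OF assms(2)] by auto
qed

lemma suf42: assumes "x < 3" "x' < 3" "\<And>k. 42 \<le> k \<Longrightarrow> k < 50 \<Longrightarrow> sigma x ! k = sigma x' ! k" shows "x = x'"
proof -
  have "sigma x ! 42 = sigma x' ! 42" "sigma x ! 45 = sigma x' ! 45" using assms(3) by simp_all
  then show ?thesis using three[OF assms(1)] three[OF assms(2)] by auto
qed

abbreviation WW :: "nat \<Rightarrow> nat" where "WW \<equiv> morph_inf sigma vtm"

lemma upt50: "[0..<50] = [0,1,2,3,4,5,6,7,8,9,10,11,12,13,14,15,16,17,18,19,20,21,22,23,24,25,26,27,28,29,30,31,32,33,34,35,36,37,38,39,40,41,42,43,44,45,46,47,48,49]" by code_simp
lemma upt23: "[3..<24] = [3,4,5,6,7,8,9,10,11,12,13,14,15,16,17,18,19,20,21,22,23]" by code_simp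

lemma W_block: "r < 50 \<Longrightarrow> WW (50*m + r) = sigma (tau (yy m)) ! r"
  by (simp add: W_eq)

lemma sigma_str: "\<exists>s. sigma a = str01 s"
  unfolding sigma_def by auto

lemma sigma_bit: "k < 50 \<Longrightarrow> sigma a ! k \<le> 1"
proof -
  assume k: "k < 50"
  obtain s where s: "sigma a = str01 s" using sigma_str by blast
  have "k < length (str01 s)" using k sigma_len[of a] s by simp
  then show ?thesis unfolding s str01_def by simp
qed

lemma W_bit: "WW n \<le> 1"
  unfolding W_eq by (rule sigma_bit) simp

lemma tau_lt3: "tau x < 3" by (simp add: tau_def)

lemma W_cat2: assumes "t mod 50 + j < 100"
  shows "WW (t + j) = cat (tau (yy (t div 50))) (tau (yy (Suc (t div 50)))) (t mod 50 + j)"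
proof -
  have "t + j = 50 * (t div 50) + t mod 50 + j" by simp
  then show ?thesis using W_cat[of "t mod 50" j "t div 50"] assms by simp
qed

lemma V2_mem: "(tau (yy (t div 50)), tau (yy (Suc (t div 50)))) \<in> set V2"
  by (rule V2_fact)

lemma sync_W: "syncf (\<lambda>j. WW (t+j)) = t mod 50"
proof -
  have "syncf (\<lambda>j. WW (t+j)) = syncf (\<lambda>j. cat (tau (yy (t div 50))) (tau (yy (Suc (t div 50)))) (t mod 50 + j))"
    by (rule syncf_cong) (simp add: W_cat2)
  also have "\<dots> = t mod 50"
  proof -
    have b: "t mod 50 \<in> set [0,1,2,3,4,5,6,7,8,9,10,11,12,13,14,15,16,17,18,19,20,21,22,23,24,25,26,27,28,29,30,31,32,33,34,35,36,37,38,39,40,41,42,43,44,45,46,47,48,49]" unfolding upt50[symmetric] by simp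
    define X where "X = tau (yy (t div 50))"
    define Z where "Z = tau (yy (Suc (t div 50)))"
    have "\<forall>b\<in>set [0,1,2,3,4,5,6,7,8,9,10,11,12,13,14,15,16,17,18,19,20,21,22,23,24,25,26,27,28,29,30,31,32,33,34,35,36,37,38,39,40,41,42,43,44,45,46,47,48,49]. syncf (\<lambda>j. cat X Z (b+j)) = b"
      using bspec[OF sync_check[unfolded list_all_iff] V2_mem[of t]] unfolding X_def Z_def by (simp only: prod.case)
    from bspec[OF this b] show ?thesis unfolding X_def Z_def .
  qed
  finally show ?thesis .
qed

lemma long_sq:
  assumes H: "\<forall>j<50*p'. WW (i+j) = WW (i+j+50*p')" and p1: "1 \<le> p'"
  shows False
proof -
  define a where "a = i div 50"
  define b where "b = i mod 50"
  define V where "V = (\<lambda>m. tau (yy m))"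
  have i: "i = 50*a + b" and b50: "b < 50" unfolding a_def b_def by simp_all
  have blk: "V m = V (m + p')" if "\<And>r. r < 28 \<Longrightarrow> WW (50*m + r) = WW (50*m + r + 50*p')" for m
  proof (rule pre28)
    show "V m < 3" "V (m+p') < 3" unfolding V_def by (simp_all add: tau_lt3)
    fix r :: nat assume r: "r < 28"
    have "sigma (V m) ! r = WW (50*m + r)" using r W_block[of r m] unfolding V_def by simp
    also have "\<dots> = WW (50*m + r + 50*p')" using that r by simp
    also have "50*m + r + 50*p' = 50*(m+p') + r" by simp
    also have "WW \<dots> = sigma (V (m+p')) ! r" using r W_block[of r "m+p'"] unfolding V_def by simp
    finally show "sigma (V m) ! r = sigma (V (m+p')) ! r" .
  qed
  have full: "V (a+k) = V (a+k+p')" if k: "(b = 0 \<or> 1 \<le> k)" "k < p'" for k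
  proof (rule blk)
    fix r :: nat assume r: "r < 28"
    have j: "50*(a+k) + r = i + (50*k + r - b)" "50*k + r - b < 50*p'"
      using k r b50 unfolding i by (auto simp: algebra_simps)
    then show "WW (50*(a+k) + r) = WW (50*(a+k) + r + 50*p')" using H by simp
  qed
  have sq: "\<forall>k<p'. V (c+k) = V (c+k+p') \<Longrightarrow> False" for c
    using vtm_sqfree[OF p1, of c] unfolding V_def by simp
  show False
  proof (cases "b = 0")
    case True
    then show False using full sq[of a] by auto
  next
    case False
    show False
    proof (cases "b \<le> 42")
      case True
      have "V a = V (a + p')"
      proof (rule suf42)
        show "V a < 3" "V (a+p') < 3" unfolding V_def by (simp_all add: tau_lt3)
        fix r :: nat assume r: "42 \<le> r" "r < 50"
        have j: "50*a + r = i + (r - b)" "r - b < 50*p'" using r True p1 unfolding i by auto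
        have "sigma (V a) ! r = WW (50*a + r)" using r W_block[of r a] unfolding V_def by simp
        also have "\<dots> = WW (50*a + r + 50*p')" using H j by simp
        also have "50*a + r + 50*p' = 50*(a+p') + r" by simp
        also have "WW \<dots> = sigma (V (a+p')) ! r" using r W_block[of r "a+p'"] unfolding V_def by simp
        finally show "sigma (V a) ! r = sigma (V (a+p')) ! r" .
      qed
      then have "\<forall>k<p'. V (a+k) = V (a+k+p')" using full False
        by (metis add.right_neutral less_one not_less)
      then show False by (rule sq)
    next
      case b42: False
      have "V (a+p') = V (a+p'+p')"
      proof (rule pre28)
        show "V (a+p') < 3" "V (a+p'+p') < 3" unfolding V_def by (simp_all add: tau_lt3)
        fix r :: nat assume r: "r < 28"
        have j: "50*(a+p') + r = i + (50*p' + r - b)" "50*p' + r - b < 50*p'" using r b42 p1 b50 unfolding i by auto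
        have "sigma (V (a+p')) ! r = WW (50*(a+p') + r)" using r W_block[of r "a+p'"] unfolding V_def by simp
        also have "\<dots> = WW (50*(a+p') + r + 50*p')" using H j by simp
        also have "50*(a+p') + r + 50*p' = 50*(a+p'+p') + r" by simp
        also have "WW \<dots> = sigma (V (a+p'+p')) ! r" using r W_block[of r "a+p'+p'"] unfolding V_def by simp
        finally show "sigma (V (a+p')) ! r = sigma (V (a+p'+p')) ! r" .
      qed
      then have "\<forall>k<p'. V (Suc a+k) = V (Suc a+k+p')"
      proof (intro allI impI)
        fix k assume k: "k < p'"
        show "V (Suc a+k) = V (Suc a+k+p')"
        proof (cases "Suc k < p'")
          case True then show ?thesis using full[of "Suc k"] by simp
        next
          case False then have "Suc k = p'" using k by simp
          then have e1: "Suc a + k = a+p'" and e2: "Suc a + k + p' = a+p'+p'" by simp_all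
          show ?thesis unfolding e1 e2 by (rule \<open>V (a+p') = V (a+p'+p')\<close>)
        qed
      qed
      then show False by (rule sq)
    qed
  qed
qed

lemma get_ctx:
  assumes "list_all (\<lambda>(x,z). P x z) V2"
  shows "P (tau (yy (t div 50))) (tau (yy (Suc (t div 50))))"
  using bspec[OF assms[unfolded list_all_iff] V2_mem[of t]] by (simp only: prod.case)

lemma sq_W:
  assumes x: "x \<noteq> []" and F: "is_factor (x@x) WW"
  shows "x @ x \<in> {[0,0],[1,1],[0,1,0,1]}"
proof -
  define p where "p = length x"
  obtain i where H0: "\<forall>j<length (x@x). WW (i+j) = (x@x) ! j" using F unfolding is_factor_def by blast
  have p1: "1 \<le> p" using x unfolding p_def by (cases x) auto
  have X: "x ! j = WW (i+j)" if "j < p" for j using H0[rule_format, of j] that unfolding p_def by (simp add: nth_append)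
  have X2: "x ! j = WW (i+p+j)" if "j < p" for j using H0[rule_format, of "p+j"] that unfolding p_def by (simp add: nth_append add.assoc)
  have H: "WW (i+j) = WW (i+p+j)" if "j < p" for j using X X2 that by simp
  define X0 where "X0 = tau (yy (i div 50))"
  define Z0 where "Z0 = tau (yy (Suc (i div 50)))"
  define b where "b = i mod 50"
  have b50: "b < 50" unfolding b_def by simp
  have C: "WW (i+j) = cat X0 Z0 (b+j)" if "b + j < 100" for j
    using W_cat2[of i j] that unfolding X0_def Z0_def b_def by simp
  have bL: "b \<in> set [0,1,2,3,4,5,6,7,8,9,10,11,12,13,14,15,16,17,18,19,20,21,22,23,24,25,26,27,28,29,30,31,32,33,34,35,36,37,38,39,40,41,42,43,44,45,46,47,48,49]" unfolding upt50[symmetric] using b50 by simp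
  consider "24 \<le> p" | "3 \<le> p \<and> p \<le> 23" | "p = 1" | "p = 2" using p1 by linarith
  then show ?thesis
  proof cases
    case 1
    have "syncf (\<lambda>j. WW (i+j)) = syncf (\<lambda>j. WW ((i+p)+j))"
      by (rule syncf_cong) (use H 1 in simp)
    then have "i mod 50 = (i+p) mod 50" by (simp only: sync_W)
    then have "50 dvd p" using mod_eq_dvd_iff_nat[of i "i+p" 50] by simp
    then obtain p' where pp: "p = 50*p'" by blast
    have "1 \<le> p'" using pp p1 by simp
    moreover have "\<forall>j<50*p'. WW (i+j) = WW (i+j+50*p')"
    proof (intro allI impI)
      fix j assume "j < 50*p'"
      then have "WW (i+j) = WW (i+p+j)" using H pp by simp
      also have "i+p+j = i+j+50*p'" using pp by simp
      finally show "WW (i+j) = WW (i+j+50*p')" .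
    qed
    ultimately show ?thesis using long_sq by blast
  next
    case 2
    have pL: "p \<in> set [3,4,5,6,7,8,9,10,11,12,13,14,15,16,17,18,19,20,21,22,23]" unfolding upt23[symmetric] using 2 by (simp del: upt_rec_numeral)
    have cc: "cov p (certD X0 Z0 p) 0 \<and> (\<forall>d\<in>set (certD X0 Z0 p). cat X0 Z0 d \<noteq> cat X0 Z0 (d+p))"
      using bspec[OF get_ctx[OF cov_check, of i, unfolded list_all_iff] pL] unfolding X0_def Z0_def by simp
    then obtain d where d: "d \<in> set (certD X0 Z0 p)" "b \<le> d" "d < b + p" using cov_sound[of p _ 0 b] b50 by auto
    then have ne: "cat X0 Z0 d \<noteq> cat X0 Z0 (d+p)" using cc by blast
    define j where "j = d - b"
    have j: "j < p" "d = b + j" using d unfolding j_def by auto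
    have "cat X0 Z0 (b+j) = WW (i+j)" using C[of j] j b50 2 by simp
    also have "\<dots> = WW (i+p+j)" using H j by simp
    also have "\<dots> = WW (i+(p+j))" by (simp add: add.assoc)
    also have "\<dots> = cat X0 Z0 (b+(p+j))" using C[of "p+j"] j b50 2 by simp
    finally show ?thesis using ne j by (simp add: add.commute add.left_commute)
  next
    case 3
    then obtain c where "x = [c]" unfolding p_def by (cases x) auto
    moreover have "c = WW i" using X[of 0] 3 \<open>x = [c]\<close> by simp
    moreover have "WW i \<le> 1" by (rule W_bit)
    ultimately show ?thesis by auto
  next
    case 4
    then obtain c0 c1 where xc: "x = [c0,c1]" unfolding p_def
      by (cases x; cases "tl x") auto
    have c: "c0 = WW (i+0)" "c1 = WW (i+1)" using X[of 0] X[of 1] 4 xc by simp_all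
    have HC: "cat X0 Z0 (b+j) = cat X0 Z0 (b+(p+j))" if "j < p" for j
    proof -
      have "cat X0 Z0 (b+j) = WW (i+j)" using C[of j] that b50 4 by simp
      also have "\<dots> = WW (i+p+j)" using H that by simp
      also have "\<dots> = WW (i+(p+j))" by (simp only: add.assoc)
      also have "\<dots> = cat X0 Z0 (b+(p+j))" using C[of "p+j"] that b50 4 by simp
      finally show ?thesis .
    qed
    have t1: "(2::nat) + 1 = 3" by simp
    have a0: "cat X0 Z0 (b+0) = cat X0 Z0 (b+(2+0))" using HC[of 0] 4 by (simp only: zero_less_numeral)
    have a1: "cat X0 Z0 (b+1) = cat X0 Z0 (b+(2+1))" using HC[of 1] 4 by (simp only: one_less_numeral_iff semiring_norm(76))
    have w: "cat X0 Z0 b = cat X0 Z0 (b+2) \<and> cat X0 Z0 (b+1) = cat X0 Z0 (b+3) \<longrightarrow>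
       cat X0 Z0 b = 0 \<and> cat X0 Z0 (b+1) = 1"
      using bspec[OF get_ctx[OF win_check, of i, unfolded list_all_iff] bL] unfolding X0_def Z0_def by (simp only:)
    have "cat X0 Z0 b = 0 \<and> cat X0 Z0 (b+1) = 1" using w a0 a1 unfolding t1 add_0_right by blast
    moreover have "c0 = cat X0 Z0 (b+0)" "c1 = cat X0 Z0 (b+1)" using c C[of 0] C[of 1] b50 by simp_all
    ultimately show ?thesis using xc by simp
  qed
qed

lemma W_small: "r < 50 \<Longrightarrow> WW r = sigma 2 ! r"
  using W_block[of r 0] by (simp add: tau_def)

lemma isf: "(\<And>j. j < length u \<Longrightarrow> WW (i+j) = u!j) \<Longrightarrow> is_factor u WW"
  unfolding is_factor_def by blast

lemma squares_W: "squares_of WW = {[0,0],[1,1],[0,1,0,1]}"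
proof
  show "squares_of WW \<subseteq> {[0,0],[1,1],[0,1,0,1]}"
    unfolding squares_of_def using sq_W by blast
next
  have f1: "is_factor [0,0] WW"
  proof (rule isf[of _ 0])
    fix j assume "j < length [0::nat,0]"
    then have "j = 0 \<or> j = 1" by auto
    then show "WW (0+j) = [0,0]!j" by (auto simp: W_small)
  qed
  have f2: "is_factor [1,1] WW"
  proof (rule isf[of _ 3])
    fix j assume "j < length [1::nat,1]"
    then have "j = 0 \<or> j = 1" by auto
    then show "WW (3+j) = [1,1]!j" by (auto simp: W_small)
  qed
  have f3: "is_factor [0,1,0,1] WW"
  proof (rule isf[of _ 6])
    fix j assume "j < length [0::nat,1,0,1]"
    then have "j = 0 \<or> j = 1 \<or> j = 2 \<or> j = 3" by auto
    then show "WW (6+j) = [0,1,0,1]!j" by (auto simp: W_small)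
  qed
  have s1: "[0,0] \<in> squares_of WW" unfolding squares_of_def mem_Collect_eq
    by (rule exI[of _ "[0]"]) (simp add: f1)
  have s2: "[1,1] \<in> squares_of WW" unfolding squares_of_def mem_Collect_eq
    by (rule exI[of _ "[1]"], intro conjI) (simp, simp, rule f2)
  have s3: "[0,1,0,1] \<in> squares_of WW" unfolding squares_of_def mem_Collect_eq
    by (rule exI[of _ "[0,1]"], intro conjI) (simp, simp, rule f3)
  show "{[0,0],[1,1],[0,1,0,1]} \<subseteq> squares_of WW" using s1 s2 s3 by blast
qed

lemma squares_card: "finite (squares_of WW) \<and> card (squares_of WW) = 3"
  unfolding squares_W by simp

definition rep :: "nat \<Rightarrow> nat \<Rightarrow> nat" where
  "rep a r = (if a = 0 then [0,1,2,3,4,5,6,7,8,9,10,11,12,13,14,15,16,17,18,19,20,21,22,23,24,25,26,27,28,29,30,31,32,33,34,35,36,37,38,39,40,41,42,43,44,45,46,47,48,49]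
    else if a = 1 then [25,26,27,28,29,50,31,51,52,53,35,54,55,56,57,58,41,59,60,61,62,63,64,65,66,0,1,67,3,4,5,6,68,69,70,10,71,12,13,72,73,16,17,74,19,75,76,77,23,24]
    else if a = 2 then [25,26,27,28,29,50,31,51,52,53,35,54,55,56,57,78,41,79,80,81,62,63,82,83,84,85,86,67,87,88,5,89,68,69,9,10,11,12,90,72,91,92,93,94,95,96,97,98,99,100]
    else [0,1,2,3,4,5,6,7,8,9,10,11,12,13,14,15,16,17,18,19,20,21,22,23,24,25,26,101,28,29,50,31,102,103,104,35,105,55,56,106,78,41,59,80,61,107,108,82,65,66]) ! r"

definition dl :: "nat \<Rightarrow> nat \<Rightarrow> nat" where
  "dl q d = (if d = 0 then [0,2,4,6,8,10,12,14,16,18,20,22,24,26,28,30,32,34,36,38,40,42,44,46,48,25,27,29,31,52,35,55,57,41,60,62,64,66,1,3,5,68,70,71,13,73,17,19,76,23,35,57,41,80,82,84,86,87,5,9,11,90,91,93,95,97,99,4,14,16,18,22,28,30,36,40,42,44,5,9,11,90,95,97,99,0,2,6,8,12,26,50,102,104,105,56,78,59,61,108,65,29,57,41,80,82,87,91,93]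
    else [1,3,5,7,9,11,13,15,17,19,21,23,25,27,29,31,33,35,37,39,41,43,45,47,49,26,28,50,51,53,54,56,58,59,61,63,65,0,67,4,6,69,10,12,72,16,74,75,77,24,54,78,79,81,83,85,67,88,89,10,12,72,92,94,96,98,100,5,15,17,19,23,29,31,37,41,43,45,89,10,12,72,96,98,100,1,3,7,9,13,101,31,103,35,55,106,41,80,107,82,66,50,78,79,81,83,88,92,94]) ! q"

definition ol :: "nat \<Rightarrow> nat" where
  "ol q = [0,0,0,1,1,0,0,1,0,1,1,0,0,0,1,0,1,1,1,0,0,1,0,1,1,0,0,0,1,1,1,0,0,1,0,1,1,1,0,0,0,1,0,1,1,0,0,1,1,1,0,1,0,1,0,0,0,1,0,1,1,0,0,1,0,1,1,1,0,1,0,1,0,1,0,1,0,1,1,0,0,1,1,0,0,1,1,0,0,1,1,1,1,0,0,0,1,0,1,1,1,1,0,1,0,1,0,1,0] ! q"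

definition wit :: "(nat \<times> nat) list" where
  "wit = [(0,0),(0,1),(0,2),(0,3),(0,4),(0,5),(0,6),(0,7),(0,8),(0,9),(0,10),(0,11),(0,12),(0,13),(0,14),(0,15),(0,16),(0,17),(0,18),(0,19),(0,20),(0,21),(0,22),(0,23),(0,24),(0,25),(0,26),(0,27),(0,28),(0,29),(0,30),(0,31),(0,32),(0,33),(0,34),(0,35),(0,36),(0,37),(0,38),(0,39),(0,40),(0,41),(0,42),(0,43),(0,44),(0,45),(0,46),(0,47),(0,48),(0,49),(1,5),(1,7),(1,8),(1,9),(1,11),(1,12),(1,13),(1,14),(1,15),(1,17),(1,18),(1,19),(1,20),(1,21),(1,22),(1,23),(1,24),(1,27),(1,32),(1,33),(1,34),(1,36),(1,39),(1,40),(1,43),(1,45),(1,46),(1,47),(2,15),(2,17),(2,18),(2,19),(2,22),(2,23),(2,24),(2,25),(2,26),(2,28),(2,29),(2,31),(2,38),(2,40),(2,41),(2,42),(2,43),(2,44),(2,45),(2,46),(2,47),(2,48),(2,49),(3,27),(3,32),(3,33),(3,34),(3,36),(3,39),(3,45),(3,46)]"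

lemma K1: "\<forall>a\<in>set [0..<4]. \<forall>r\<in>set [0..<50]. \<forall>d\<in>set [0..<2].
   dl (rep a r) d = rep (g a ! ((2*r+d) div 50)) ((2*r+d) mod 50)"
  by code_simp

lemma K2: "\<forall>a\<in>set [0..<4]. \<forall>r\<in>set [0..<50]. ol (rep a r) = sigma (tau a) ! r"
  by code_simp

lemma K3: "\<forall>q\<in>set [0..<109]. dl q 0 < 109 \<and> dl q 1 < 109"
  by code_simp

lemma K4: "\<forall>q\<in>set [0..<109]. fst (wit ! q) < 4 \<and> snd (wit ! q) < 50 \<and> rep (fst (wit ! q)) (snd (wit ! q)) = q"
  by code_simp

lemma rep00: "rep 0 0 = 0" by (simp add: rep_def)

lemma base_digits_2: "base_digits 2 n = (if n = 0 then [] else base_digits 2 (n div 2) @ [n mod 2])"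
  by (simp add: base_digits.simps[of 2 n])

lemma run_rec: "dfao_run 2 q0 delta n = (if n = 0 then q0 else delta (dfao_run 2 q0 delta (n div 2)) (n mod 2))"
  unfolding dfao_run_def by (subst base_digits_2) simp

lemma run_inv: "dfao_run 2 0 dl n = rep (yy (n div 50)) (n mod 50)"
proof (induction n rule: less_induct)
  case (less n)
  show ?case
  proof (cases "n = 0")
    case True then show ?thesis by (simp add: run_rec rep00)
  next
    case False
    define m where "m = n div 2"
    define d where "d = n mod 2"
    define a where "a = yy (m div 50)"
    define r where "r = m mod 50"
    have d2: "d < 2" and r50: "r < 50" and a4: "a < 4" unfolding d_def r_def a_def by (simp_all add: yy_lt4)
    have IH: "dfao_run 2 0 dl m = rep a r" using less False unfolding m_def a_def r_def by simp
    have e1: "n = 2*m + d" unfolding m_def d_def by simp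
    have e2: "m = 50*(m div 50) + r" unfolding r_def by simp
    have n: "n = (2*r+d) + 50*(2*(m div 50))" using e1 e2 by linarith
    have c2: "(2*r+d) div 50 < 2" using r50 d2 by simp
    have nd: "n div 50 = 2*(m div 50) + (2*r+d) div 50" by (subst n, subst div_mult_self2) simp_all
    have nm: "n mod 50 = (2*r+d) mod 50" by (subst n, rule mod_mult_self2)
    have "dfao_run 2 0 dl n = dl (rep a r) d" using False IH unfolding m_def d_def by (subst run_rec) simp
    also have "\<dots> = rep (g a ! ((2*r+d) div 50)) ((2*r+d) mod 50)"
      using K1 a4 r50 d2 by simp
    also have "g a ! ((2*r+d) div 50) = yy (n div 50)" unfolding nd a_def by (rule yy_rec[symmetric, OF c2])
    finally show ?thesis unfolding nm .
  qed
qed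

lemma out_ok: "ol (dfao_run 2 0 dl n) = WW n"
proof -
  have "yy (n div 50) < 4" "n mod 50 < 50" by (simp_all add: yy_lt4)
  then have "ol (rep (yy (n div 50)) (n mod 50)) = sigma (tau (yy (n div 50))) ! (n mod 50)"
    using K2 by simp
  then show ?thesis by (simp add: run_inv W_eq)
qed

lemma gen: "dfao_generates 2 {0..<109} 0 dl ol WW"
  unfolding dfao_generates_def
proof (intro conjI ballI allI impI)
  fix q d :: nat assume q: "q \<in> {0..<109}" and d: "d < 2"
  have h: "dl q 0 < 109 \<and> dl q 1 < 109" using K3 q by simp
  have "d = 0 \<or> d = 1" using d by auto
  then show "dl q d \<in> {0..<109}" using h by auto
qed (simp_all add: out_ok)

lemma reach: "\<forall>q\<in>{0..<109::nat}. \<exists>n. dfao_run 2 0 dl n = q"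
proof
  fix q :: nat assume "q \<in> {0..<109}"
  then have "fst (wit ! q) < 4 \<and> snd (wit ! q) < 50 \<and> rep (fst (wit ! q)) (snd (wit ! q)) = q"
    using K4 by simp
  then obtain a r where ar: "a < 4" "r < 50" "rep a r = q" by blast
  define pos where "pos = (if a = 3 then 5 else a)"
  have "yy pos = a" using ar(1) unfolding pos_def
    using four[of a] by (auto simp: yy_num yy_1 yy_Suc0 g_def)
  moreover have "(50*pos + r) div 50 = pos" "(50*pos + r) mod 50 = r" using ar(2) by simp_all
  ultimately have "dfao_run 2 0 dl (50*pos + r) = q" using ar by (simp add: run_inv)
  then show "\<exists>n. dfao_run 2 0 dl n = q" by blast
qed

theorem theorem2:
  shows "k_automatic 2 (morph_inf sigma vtm)
    \<and> finite (squares_of (morph_inf sigma vtm)) \<and> card (squares_of (morph_inf sigma vtm)) = 3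
    \<and> (\<exists>Q q0 delta out. dfao_generates 2 Q q0 delta out (morph_inf sigma vtm) \<and> card Q = 109
          \<and> (\<forall>q\<in>Q. \<exists>n. dfao_run 2 q0 delta n = q))"
proof (intro conjI)
  show "k_automatic 2 (morph_inf sigma vtm)" unfolding k_automatic_def using gen by blast
  show "finite (squares_of (morph_inf sigma vtm))" "card (squares_of (morph_inf sigma vtm)) = 3"
    using squares_card by simp_all
  show "\<exists>Q q0 delta out. dfao_generates 2 Q q0 delta out (morph_inf sigma vtm) \<and> card Q = 109
          \<and> (\<forall>q\<in>Q. \<exists>n. dfao_run 2 q0 delta n = q)"
    using gen reach by (intro exI[of _ "{0..<109}"] exI[of _ 0] exI[of _ dl] exI[of _ ol]) simp
qed

end
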